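(* Let $n,m\ge1$, $S=\{(x,y)\in\mathbb{R}^{n+m} : \|x\|\le\|y\|\}$, and for $\lambda\in\mathbb{R}^n$ with $\|\lambda\|=1$ let $C_\lambda=\{(x,y)\in\mathbb{R}^{n+m} : \lambda^\mathsf{T} x\ge\|y\|\}$. Then $C_\lambda$ is a maximal $S$-free set. Furthermore, if $(\bar x,\bar y)\in\mathbb{R}^{n+m}$ satisfies $\|\bar x\|>\|\bar y\|$ and $\lambda=\bar x/\|\bar x\|$, then $(\bar x,\bar y)\in\operatorname{int}(C_\lambda)$.
   Context: $\|\cdot\|$ is the Euclidean norm. For a closed set $S\subseteq\mathbb{R}^N$, a convex set $C$ is $S$-free if $\operatorname{int}(C)\cap S=\emptyset$, and maximal $S$-free if it is $S$-free and no $S$-free convex set strictly contains it. *)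

theory Defs
  imports "HOL-Analysis.Analysis"
begin

definition S_free :: "'a::euclidean_space set \<Rightarrow> 'a set \<Rightarrow> bool" where
  "S_free S C \<longleftrightarrow> convex C \<and> interior C \<inter> S = {}"

definition maximal_S_free :: "'a::euclidean_space set \<Rightarrow> 'a set \<Rightarrow> bool" where
  "maximal_S_free S C \<longleftrightarrow> S_free S C \<and> \<not> (\<exists>D. S_free S D \<and> C \<subset> D)"

end

theory Submission
  imports Defs
begin

lemma openU: "open {z :: (real^'n) \<times> (real^'m). norm (snd z) < l \<bullet> fst z}"
  by (intro open_Collect_less continuous_intros)

theorem theorem7:
  fixes S :: "((real^'n) \<times> (real^'m)) set"
    and C :: "real^'n \<Rightarrow> ((real^'n) \<times> (real^'m)) set"
  defines "S \<equiv> {(x, y). norm x \<le> norm y}"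
  defines "C \<equiv> (\<lambda>l. {(x, y). l \<bullet> x \<ge> norm y})"
  shows "(\<forall>l. norm l = 1 \<longrightarrow> maximal_S_free S (C l)) \<and>
         (\<forall>xb yb l. norm xb > norm yb \<and> l = xb /\<^sub>R norm xb \<longrightarrow> (xb, yb) \<in> interior (C l))"
proof -
  have UC: "{z. norm (snd z) < l \<bullet> fst z} \<subseteq> C l" for l
    unfolding C_def by auto
  have intU: "z \<in> interior (C l)" if "norm (snd z) < l \<bullet> fst z" for z l
    using interior_maximal[OF UC openU] that by auto
  have part1: "maximal_S_free S (C l)" if l1: "norm l = 1" for l
  proof -
    have ll: "l \<bullet> l = 1" using l1 by (simp add: inner_commute norm_eq_sqrt_inner)
    have cvx: "convex (C l)"
    proof (rule convexI)
      fix p q :: "(real^'n) \<times> (real^'m)" and u v :: real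
      assume hp: "p \<in> C l" "q \<in> C l" and h0: "0 \<le> u" "0 \<le> v" "u + v = 1"
      obtain x1 y1 where p: "p = (x1,y1)" by (cases p)
      obtain x2 y2 where q: "q = (x2,y2)" by (cases q)
      have h: "norm y1 \<le> l \<bullet> x1" "norm y2 \<le> l \<bullet> x2" using hp p q unfolding C_def by auto
      have "norm (u *\<^sub>R y1 + v *\<^sub>R y2) \<le> u * norm y1 + v * norm y2"
        using h0 by (metis abs_of_nonneg norm_scaleR norm_triangle_ineq)
      also have "\<dots> \<le> u * (l \<bullet> x1) + v * (l \<bullet> x2)"
        using h h0 by (intro add_mono mult_left_mono) auto
      finally show "u *\<^sub>R p + v *\<^sub>R q \<in> C l" unfolding C_def p q by (simp add: inner_add_right)
    qed
    have free: "interior (C l) \<inter> S = {}"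
    proof (rule ccontr)
      assume "interior (C l) \<inter> S \<noteq> {}"
      then obtain x y where xi: "(x,y) \<in> interior (C l)" and xs: "norm x \<le> norm y"
        unfolding S_def by auto
      obtain e where e: "e > 0" "ball (x,y) e \<subseteq> C l"
        using xi by (meson open_contains_ball_eq open_interior interior_subset subset_trans)
      have "dist (x,y) (x - (e/2) *\<^sub>R l, y) < e"
        using e l1 by (simp add: dist_Pair_Pair dist_norm)
      then have "(x - (e/2) *\<^sub>R l, y) \<in> C l" using e by auto
      then have "l \<bullet> x - e/2 \<ge> norm y" unfolding C_def using ll by (simp add: inner_diff_right)
      moreover have "l \<bullet> x \<le> norm x" using norm_cauchy_schwarz[of l x] l1 by simp
      ultimately show False using xs e by linarith
    qed
    have maxi: "\<not> (\<exists>D. S_free S D \<and> C l \<subset> D)"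
    proof
      assume "\<exists>D. S_free S D \<and> C l \<subset> D"
      then obtain D where D: "convex D" "interior D \<inter> S = {}" "C l \<subseteq> D" "C l \<noteq> D"
        unfolding S_free_def by auto
      then obtain x0 y0 where p: "(x0,y0) \<in> D" "(x0,y0) \<notin> C l" by auto
      define r where "r = norm y0"
      define a where "a = l \<bullet> x0"
      have ar: "a < r" using p unfolding C_def r_def a_def by auto
      define c where "c = (2 * r) *\<^sub>R l - x0"
      have "norm (snd (c, y0)) < l \<bullet> fst (c, y0)"
        using ar ll by (simp add: c_def r_def a_def inner_diff_right)
      then have "(c,y0) \<in> interior (C l)" by (rule intU)
      then obtain d where d: "d > 0" "ball (c,y0) d \<subseteq> C l"
        by (meson open_contains_ball_eq open_interior interior_subset subset_trans)
      have "ball (r *\<^sub>R l, y0) (d/2) \<subseteq> D"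
      proof
        fix w assume w: "w \<in> ball (r *\<^sub>R l, y0) (d/2)"
        have "2 *\<^sub>R w - (x0,y0) \<in> ball (c,y0) d"
        proof -
          have "2 *\<^sub>R w - (x0,y0) - (c,y0) = 2 *\<^sub>R (w - (r *\<^sub>R l, y0))"
            by (cases w) (simp add: c_def scaleR_2 algebra_simps del: mult_2 mult_2_right)
          then have "dist (c,y0) (2 *\<^sub>R w - (x0,y0)) = 2 * dist (r *\<^sub>R l, y0) w"
            by (metis dist_commute dist_norm norm_scaleR abs_numeral)
          then show ?thesis using w by simp
        qed
        then have "2 *\<^sub>R w - (x0,y0) \<in> D" using d D by auto
        from convexD[OF D(1) this p(1), of "1/2" "1/2"]
        show "w \<in> D" by (simp add: algebra_simps)
      qed
      then have "(r *\<^sub>R l, y0) \<in> interior D" using d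
        by (meson half_gt_zero interior_maximal open_ball centre_in_ball subsetD)
      moreover have "(r *\<^sub>R l, y0) \<in> S" unfolding S_def r_def using l1 by simp
      ultimately show False using D by auto
    qed
    show ?thesis unfolding maximal_S_free_def S_free_def[of S "C l"] using cvx free maxi by blast
  qed
  have part2: "(xb, yb) \<in> interior (C l)" if "norm xb > norm yb" "l = xb /\<^sub>R norm xb" for xb yb l
  proof (rule intU)
    have np: "norm xb > 0" using that(1) by (meson le_less_trans norm_ge_zero)
    have "l \<bullet> xb = (xb \<bullet> xb) / norm xb" using that(2) by (simp add: field_simps inner_commute)
    also have "\<dots> = norm xb" using np by (simp add: power2_norm_eq_inner[symmetric] power2_eq_square)
    finally have "l \<bullet> xb = norm xb" .
    then show "norm (snd (xb, yb)) < l \<bullet> fst (xb, yb)" using that by simp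
  qed
  show ?thesis using part1 part2 by blast
qed

end
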